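(* Let $n\ge1$, let $\mathfrak{n}=\mathfrak{n}(n)$, $\operatorname{Der}(\mathfrak{n})_1$, $B$ and $\mathfrak{B}(B)$ be as in the context, and let $D\in\operatorname{Der}(\mathfrak{n})_1$. For $v\in\mathfrak{B}(B)$ let $\lambda_v$ denote the diagonal coefficient of the matrix of $D$ in the basis $\mathfrak{B}(B)$ corresponding to $v$ (i.e. the $v$-coordinate of $D(v)$). Then: (a) $\lambda_{e'_i}=0$ for $1\le i\le n$; (b) $\lambda_a=\lambda_b=\lambda_x$; (c) $\lambda_h=\lambda_f=3\lambda_a$; (d) $\lambda_y=\lambda_u=\lambda_c=2\lambda_a$.
   Context: Fix a field of characteristic zero and a positive integer $n$. The Lie algebra $\mathfrak{n}(n)$ has basis $e_1,\dots,e_n,a,b,x$; $u,y$; $e_i\wedge e_j$ ($1\le i<j\le n$); $c$; $x_1,\dots,x_n$; $u_1,\dots,u_n$; $y_1,\dots,y_n$; $f,h$. Its bracket is defined on basis elements by: $[e_i,e_j]=e_i\wedge e_j$ for $i<j$ (so $[e_j,e_i]=-e_i\wedge e_j$), $[e_i,x]=x_i$, $[e_i,u]=u_i$, $[e_i,y]=y_i$, $[a,b]=c$, $[a,y]=f$, $[a,c]=h$, $[b,u]=h$, $[b,y]=h$, $[x,u]=f$, $[x,y]=h$, extended by antisymmetry, and all other brackets of pairs of basis elements are zero. Let $E=\operatorname{span}\{e_1,\dots,e_n\}$ and let $W$ be the span of all the other basis vectors. Let $\operatorname{Der}(\mathfrak{n})_1$ be the set of derivations $D$ of $\mathfrak{n}$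 with $D(E)\subset W$. For a basis $B=\{e'_1,\dots,e'_n\}$ of $E$, put $x'_i=[e'_i,x]$, $u'_i=[e'_i,u]$, $y'_i=[e'_i,y]$, $e'_i\wedge e'_j=[e'_i,e'_j]$, and let $\mathfrak{B}(B)$ be the ordered basis $e'_1,\dots,e'_n,a,b,x,u,y,(e'_i\wedge e'_j)_{1\le i<j\le n}$ (lexicographic order), $c,x'_1,\dots,x'_n,u'_1,\dots,u'_n,y'_1,\dots,y'_n,f,h$. *)

theory Defs
  imports Main
begin

text \<open>Basis indices of the Lie algebra n(n).  E i = e_i, W i j = e_i wedge e_j,
  XI i = x_i, UI i = u_i, YI i = y_i; indices are 1-based.\<close>
datatype idx = E nat | A | B | X | U | Y | W nat nat | C | XI nat | UI nat | YI nat | F | H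

definition valid :: "nat \<Rightarrow> idx set" where
  "valid n = {E i | i. 1 \<le> i \<and> i \<le> n} \<union> {A, B, X, U, Y, C, F, H}
     \<union> {W i j | i j. 1 \<le> i \<and> i < j \<and> j \<le> n}
     \<union> {XI i | i. 1 \<le> i \<and> i \<le> n} \<union> {UI i | i. 1 \<le> i \<and> i \<le> n}
     \<union> {YI i | i. 1 \<le> i \<and> i \<le> n}"

text \<open>Brackets [p,q] = r of basis elements as listed in the definition (one orientation).\<close>
fun pos :: "idx \<Rightarrow> idx \<Rightarrow> idx option" where
  "pos (E i) (E j) = (if i < j then Some (W i j) else None)"
| "pos (E i) X = Some (XI i)"
| "pos (E i) U = Some (UI i)"
| "pos (E i) Y = Some (YI i)"
| "pos A B = Some C"
| "pos A Y = Some F"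
| "pos A C = Some H"
| "pos B U = Some H"
| "pos B Y = Some H"
| "pos X U = Some F"
| "pos X Y = Some H"
| "pos _ _ = None"

definition unitv :: "idx \<Rightarrow> idx \<Rightarrow> 'k::field" where
  "unitv r = (\<lambda>k. if k = r then 1 else 0)"

definition brb :: "idx \<Rightarrow> idx \<Rightarrow> idx \<Rightarrow> 'k::field" where
  "brb p q = (case pos p q of Some r \<Rightarrow> unitv r
              | None \<Rightarrow> (case pos q p of Some r \<Rightarrow> (\<lambda>k. - unitv r k) | None \<Rightarrow> (\<lambda>k. 0)))"

definition vec :: "nat \<Rightarrow> (idx \<Rightarrow> 'k::field) set" where
  "vec n = {v. \<forall>k. k \<notin> valid n \<longrightarrow> v k = 0}"

definition bracket :: "nat \<Rightarrow> (idx \<Rightarrow> 'k::field) \<Rightarrow> (idx \<Rightarrow> 'k) \<Rightarrow> idx \<Rightarrow> 'k" where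
  "bracket n v w = (\<lambda>k. \<Sum>p\<in>valid n. \<Sum>q\<in>valid n. v p * w q * brb p q k)"

definition is_E :: "idx \<Rightarrow> bool" where
  "is_E k \<longleftrightarrow> (\<exists>i. k = E i)"

definition Espace :: "nat \<Rightarrow> (idx \<Rightarrow> 'k::field) set" where
  "Espace n = {v \<in> vec n. \<forall>k. \<not> is_E k \<longrightarrow> v k = 0}"

definition is_derivation :: "nat \<Rightarrow> ((idx \<Rightarrow> 'k::field) \<Rightarrow> (idx \<Rightarrow> 'k)) \<Rightarrow> bool" where
  "is_derivation n D \<longleftrightarrow>
     (\<forall>v\<in>vec n. D v \<in> vec n)
   \<and> (\<forall>v\<in>vec n. \<forall>w\<in>vec n. \<forall>c. D (\<lambda>k. v k + c * w k) = (\<lambda>k. D v k + c * D w k))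
   \<and> (\<forall>v\<in>vec n. \<forall>w\<in>vec n. D (bracket n v w) = (\<lambda>k. bracket n (D v) w k + bracket n v (D w) k))"

text \<open>Der(n)_1: derivations with D(E) contained in W (W = span of the non-E basis vectors).\<close>
definition Der1 :: "nat \<Rightarrow> ((idx \<Rightarrow> 'k::field) \<Rightarrow> (idx \<Rightarrow> 'k)) \<Rightarrow> bool" where
  "Der1 n D \<longleftrightarrow> is_derivation n D \<and> (\<forall>v\<in>Espace n. \<forall>k. is_E k \<longrightarrow> D v k = 0)"

definition is_Ebasis :: "nat \<Rightarrow> (nat \<Rightarrow> idx \<Rightarrow> 'k::field) \<Rightarrow> bool" where
  "is_Ebasis n ep \<longleftrightarrow>
     (\<forall>i\<in>{1..n}. ep i \<in> Espace n)
   \<and> (\<forall>c. (\<forall>k. (\<Sum>i=1..n. c i * ep i k) = 0) \<longrightarrow> (\<forall>i\<in>{1..n}. c i = 0))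
   \<and> (\<forall>v\<in>Espace n. \<exists>c. v = (\<lambda>k. \<Sum>i=1..n. c i * ep i k))"

text \<open>The basis frakB(B), indexed by the same index set as the standard basis.\<close>
fun newbasis :: "nat \<Rightarrow> (nat \<Rightarrow> idx \<Rightarrow> 'k::field) \<Rightarrow> idx \<Rightarrow> idx \<Rightarrow> 'k" where
  "newbasis n ep (E i) = ep i"
| "newbasis n ep (W i j) = bracket n (ep i) (ep j)"
| "newbasis n ep (XI i) = bracket n (ep i) (unitv X)"
| "newbasis n ep (UI i) = bracket n (ep i) (unitv U)"
| "newbasis n ep (YI i) = bracket n (ep i) (unitv Y)"
| "newbasis n ep r = unitv r"

definition coord :: "nat \<Rightarrow> (nat \<Rightarrow> idx \<Rightarrow> 'k::field) \<Rightarrow> (idx \<Rightarrow> 'k) \<Rightarrow> idx \<Rightarrow> 'k" where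
  "coord n ep w r = (THE c. (\<forall>k. k \<notin> valid n \<longrightarrow> c k = 0)
        \<and> w = (\<lambda>k. \<Sum>j\<in>valid n. c j * newbasis n ep j k)) r"

definition diagc :: "nat \<Rightarrow> (nat \<Rightarrow> idx \<Rightarrow> 'k::field) \<Rightarrow> ((idx \<Rightarrow> 'k) \<Rightarrow> (idx \<Rightarrow> 'k)) \<Rightarrow> idx \<Rightarrow> 'k" where
  "diagc n ep D r = coord n ep (D (newbasis n ep r)) r"

end

theory Submission
  imports Defs
begin


definition bsupp :: "idx \<Rightarrow> (idx \<times> idx) set" where
 "bsupp k = (case k of W a b \<Rightarrow> {(E a,E b),(E b,E a)} | XI a \<Rightarrow> {(E a,X),(X,E a)}
   | UI a \<Rightarrow> {(E a,U),(U,E a)} | YI a \<Rightarrow> {(E a,Y),(Y,E a)} | C \<Rightarrow> {(A,B),(B,A)}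
   | F \<Rightarrow> {(A,Y),(Y,A),(X,U),(U,X)}
   | H \<Rightarrow> {(A,C),(C,A),(B,U),(U,B),(B,Y),(Y,B),(X,Y),(Y,X)} | _ \<Rightarrow> {})"
lemma pos_supp: "pos p q = Some r \<Longrightarrow> (p,q) \<in> bsupp r \<and> (q,p) \<in> bsupp r"
  by (cases p; cases q; auto simp add: bsupp_def split: if_splits)
lemma brb_supp: "brb p q k \<noteq> (0::'k::field) \<Longrightarrow> (p,q) \<in> bsupp k"
  unfolding brb_def
  by (auto simp: unitv_def split: option.splits if_splits dest: pos_supp)
lemma valid_eq: "valid n = E`{1..n} \<union> {A,B,X,U,Y,C,F,H} \<union> (\<lambda>(i,j). W i j)`{(i,j). 1\<le>i \<and> i<j \<and> j\<le>n}
   \<union> XI`{1..n} \<union> UI`{1..n} \<union> YI`{1..n}"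
  unfolding valid_def by auto

lemma finite_valid[simp]: "finite (valid n)"
proof -
  have "{(i,j). 1\<le>i \<and> i<j \<and> j\<le>n} \<subseteq> {1..n}\<times>{1..n}" by auto
  hence "finite {(i::nat,j). 1\<le>i \<and> i<j \<and> j\<le>n}" by (rule finite_subset) auto
  thus ?thesis unfolding valid_eq by auto
qed

lemma bracket_supp: "bracket n v w k = (\<Sum>pq\<in>(valid n \<times> valid n) \<inter> bsupp k. v (fst pq) * w (snd pq) * (brb (fst pq) (snd pq) k::'k::field))"
proof -
  have "bracket n v w k = (\<Sum>pq\<in>valid n \<times> valid n. v (fst pq) * w (snd pq) * (brb (fst pq) (snd pq) k::'k::field))"
    unfolding bracket_def by (simp add: sum.cartesian_product case_prod_beta)
  also have "\<dots> = (\<Sum>pq\<in>(valid n \<times> valid n) \<inter> bsupp k. v (fst pq) * w (snd pq) * (brb (fst pq) (snd pq) k::'k::field))"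
    by (rule sum.mono_neutral_right) (auto dest: brb_supp)
  finally show ?thesis .
qed

lemma consts_valid[simp]: "A \<in> valid n" "B \<in> valid n" "X \<in> valid n" "U \<in> valid n"
  "Y \<in> valid n" "C \<in> valid n" "F \<in> valid n" "H \<in> valid n"
  by (auto simp: valid_def)
lemma E_valid[simp]: "E i \<in> valid n \<longleftrightarrow> 1 \<le> i \<and> i \<le> n"
  "XI i \<in> valid n \<longleftrightarrow> 1 \<le> i \<and> i \<le> n"
  "UI i \<in> valid n \<longleftrightarrow> 1 \<le> i \<and> i \<le> n"
  "YI i \<in> valid n \<longleftrightarrow> 1 \<le> i \<and> i \<le> n"
  "W i j \<in> valid n \<longleftrightarrow> 1 \<le> i \<and> i < j \<and> j \<le> n"
  by (auto simp: valid_def)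

lemma brb_vals: "brb A B = unitv C" "brb B A = (\<lambda>k. - unitv C k)"
  "brb A Y = unitv F" "brb Y A = (\<lambda>k. - unitv F k)"
  "brb X U = unitv F" "brb U X = (\<lambda>k. - unitv F k)"
  "brb A C = unitv H" "brb C A = (\<lambda>k. - unitv H k)"
  "brb B U = unitv H" "brb U B = (\<lambda>k. - unitv H k)"
  "brb B Y = unitv H" "brb Y B = (\<lambda>k. - unitv H k)"
  "brb X Y = unitv H" "brb Y X = (\<lambda>k. - unitv H k)"
  "brb (E i) X = unitv (XI i)" "brb X (E i) = (\<lambda>k. - unitv (XI i) k)"
  "brb (E i) U = unitv (UI i)" "brb U (E i) = (\<lambda>k. - unitv (UI i) k)"
  "brb (E i) Y = unitv (YI i)" "brb Y (E i) = (\<lambda>k. - unitv (YI i) k)"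
  by (simp_all add: brb_def)

lemma brb_EE[simp]: "brb (E i) (E i) = (\<lambda>k. 0)" by (simp add: brb_def)

lemma bracket_C: "bracket n v w C = v A * w B - v B * w A"
proof -
  have "(valid n \<times> valid n) \<inter> bsupp C = {(A,B),(B,A)}" by (auto simp: bsupp_def)
  thus ?thesis by (simp add: bracket_supp brb_vals unitv_def)
qed
lemma bracket_F: "bracket n v w F = v A * w Y - v Y * w A + v X * w U - v U * w X"
proof -
  have "(valid n \<times> valid n) \<inter> bsupp F = {(A,Y),(Y,A),(X,U),(U,X)}" by (auto simp: bsupp_def)
  thus ?thesis by (simp add: bracket_supp brb_vals unitv_def)
qed
lemma bracket_H: "bracket n v w H = v A * w C - v C * w A + v B * w U - v U * w B + v B * w Y - v Y * w B + v X * w Y - v Y * w X"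
proof -
  have "(valid n \<times> valid n) \<inter> bsupp H = {(A,C),(C,A),(B,U),(U,B),(B,Y),(Y,B),(X,Y),(Y,X)}" by (auto simp: bsupp_def)
  thus ?thesis by (simp add: bracket_supp brb_vals unitv_def)
qed
lemma bracket_XI: "bracket n v w (XI p) = (if 1 \<le> p \<and> p \<le> n then v (E p) * w X - v X * w (E p) else 0)"
proof -
  have "(valid n \<times> valid n) \<inter> bsupp (XI p) = (if 1 \<le> p \<and> p \<le> n then {(E p,X),(X,E p)} else {})" by (auto simp: bsupp_def)
  thus ?thesis by (simp add: bracket_supp brb_vals unitv_def)
qed
lemma bracket_UI: "bracket n v w (UI p) = (if 1 \<le> p \<and> p \<le> n then v (E p) * w U - v U * w (E p) else 0)"
proof -
  have "(valid n \<times> valid n) \<inter> bsupp (UI p) = (if 1 \<le> p \<and> p \<le> n then {(E p,U),(U,E p)} else {})" by (auto simp: bsupp_def)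
  thus ?thesis by (simp add: bracket_supp brb_vals unitv_def)
qed
lemma bracket_YI: "bracket n v w (YI p) = (if 1 \<le> p \<and> p \<le> n then v (E p) * w Y - v Y * w (E p) else 0)"
proof -
  have "(valid n \<times> valid n) \<inter> bsupp (YI p) = (if 1 \<le> p \<and> p \<le> n then {(E p,Y),(Y,E p)} else {})" by (auto simp: bsupp_def)
  thus ?thesis by (simp add: bracket_supp brb_vals unitv_def)
qed
lemma bracket_W: "bracket n v w (W p q) = (if 1 \<le> p \<and> p < q \<and> q \<le> n then v (E p) * w (E q) - v (E q) * w (E p) else 0)"
proof (cases "1 \<le> p \<and> p \<le> n \<and> 1 \<le> q \<and> q \<le> n")
  case True
  hence "(valid n \<times> valid n) \<inter> bsupp (W p q) = {(E p,E q),(E q,E p)}" by (auto simp: bsupp_def)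
  moreover have bW: "brb (E i) (E j) (W p q) = (if i = p \<and> j = q \<and> i < j then 1 else if i = q \<and> j = p \<and> j < i then -1 else 0)" for i j
    by (auto simp: brb_def unitv_def)
  ultimately show ?thesis using True
    by (cases "p = q") (simp_all add: bracket_supp bW)
next
  case False
  hence "(valid n \<times> valid n) \<inter> bsupp (W p q) = {}" by (auto simp: bsupp_def)
  thus ?thesis using False by (auto simp: bracket_supp)
qed
lemma bracket_other: "bracket n v w (E i) = 0" "bracket n v w A = 0" "bracket n v w B = 0"
  "bracket n v w X = 0" "bracket n v w U = 0" "bracket n v w Y = 0"
  by (simp_all add: bracket_supp bsupp_def)




lemma Lset_eq: "{(i::nat,j). 1\<le>i \<and> i<j \<and> j\<le>n} = {x\<in>{1..n}\<times>{1..n}. fst x < snd x}" by auto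

lemma sum_valid: "sum g (valid n) = (\<Sum>i=1..n. g (E i)) + (\<Sum>i=1..n. g (XI i)) + (\<Sum>i=1..n. g (UI i))
   + (\<Sum>i=1..n. g (YI i)) + (\<Sum>i=1..n. \<Sum>l=1..n. if i<l then g (W i l) else 0)
   + (g A + g B + g X + g U + g Y + g C + g F + g H)"
proof -
  let ?L = "{(i,j). 1\<le>i \<and> i<j \<and> j\<le>(n::nat)}"
  have fL: "finite ?L" unfolding Lset_eq by auto
  have "sum g (valid n) = sum g (E`{1..n}) + sum g {A,B,X,U,Y,C,F,H} + sum g ((\<lambda>(i,j). W i j)`?L)
     + sum g (XI`{1..n}) + sum g (UI`{1..n}) + sum g (YI`{1..n})"
    unfolding valid_eq
    by (subst sum.union_disjoint, (use fL in auto)[3])+ simp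
  moreover have "sum g (E`{1..n}) = (\<Sum>i=1..n. g (E i))" by (subst sum.reindex) (auto simp: inj_on_def)
  moreover have "sum g (XI`{1..n}) = (\<Sum>i=1..n. g (XI i))" by (subst sum.reindex) (auto simp: inj_on_def)
  moreover have "sum g (UI`{1..n}) = (\<Sum>i=1..n. g (UI i))" by (subst sum.reindex) (auto simp: inj_on_def)
  moreover have "sum g (YI`{1..n}) = (\<Sum>i=1..n. g (YI i))" by (subst sum.reindex) (auto simp: inj_on_def)
  moreover have "sum g {A,B,X,U,Y,C,F,H} = g A + g B + g X + g U + g Y + g C + g F + g H" by (simp add: add.assoc)
  moreover have "sum g ((\<lambda>(i,j). W i j)`?L) = (\<Sum>i=1..n. \<Sum>l=1..n. if i<l then g (W i l) else 0)"
  proof -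
    have "sum g ((\<lambda>(i,j). W i j)`?L) = (\<Sum>x\<in>?L. g (W (fst x) (snd x)))"
      by (subst sum.reindex) (auto simp: inj_on_def case_prod_beta)
    also have "\<dots> = (\<Sum>x\<in>{1..n}\<times>{1..n}. if fst x < snd x then g (W (fst x) (snd x)) else 0)"
      unfolding Lset_eq by (subst sum.inter_filter) auto
    also have "\<dots> = (\<Sum>i=1..n. \<Sum>l=1..n. if i<l then g (W i l) else 0)"
      by (simp add: sum.cartesian_product case_prod_beta)
    finally show ?thesis .
  qed
  ultimately show ?thesis by (simp add: algebra_simps)
qed




lemma brb_antisym: "brb q p k = - (brb p q k :: 'k::field)"
  unfolding brb_def by (cases p; cases q; auto simp: unitv_def)

lemma bracket_antisym: "bracket n w v k = - (bracket n v w k :: 'k::field)"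
proof -
  have "bracket n w v k = (\<Sum>q\<in>valid n. \<Sum>p\<in>valid n. w q * v p * brb q p k)"
    unfolding bracket_def ..
  also have "\<dots> = (\<Sum>p\<in>valid n. \<Sum>q\<in>valid n. w q * v p * brb q p k)" by (rule sum.swap)
  also have "\<dots> = (\<Sum>p\<in>valid n. \<Sum>q\<in>valid n. - (v p * w q * brb p q k))"
    by (intro sum.cong refl) (subst brb_antisym, simp)
  also have "\<dots> = - bracket n v w k" unfolding bracket_def by (simp add: sum_negf)
  finally show ?thesis .
qed

lemma bracket_self: "bracket n v v k = (0 :: 'k::field_char_0)"
  using bracket_antisym[of n v v k] by simp

lemma bracket_sum_left:
  "bracket n (\<lambda>k. \<Sum>i\<in>I. a i * f i k) w k = (\<Sum>i\<in>I. a i * bracket n (f i) w k :: 'k::field)"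
proof -
  let ?V = "valid n"
  have "bracket n (\<lambda>k. \<Sum>i\<in>I. a i * f i k) w k = (\<Sum>p\<in>?V. \<Sum>q\<in>?V. \<Sum>i\<in>I. a i * (f i p * w q * brb p q k))"
    unfolding bracket_def by (simp add: sum_distrib_right mult.assoc)
  also have "\<dots> = (\<Sum>p\<in>?V. \<Sum>i\<in>I. \<Sum>q\<in>?V. a i * (f i p * w q * brb p q k))"
    by (rule sum.cong[OF refl], rule sum.swap)
  also have "\<dots> = (\<Sum>i\<in>I. \<Sum>p\<in>?V. \<Sum>q\<in>?V. a i * (f i p * w q * brb p q k))"
    by (rule sum.swap)
  also have "\<dots> = (\<Sum>i\<in>I. a i * bracket n (f i) w k)"
    unfolding bracket_def by (simp add: sum_distrib_left)
  finally show ?thesis .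
qed

lemma bracket_sum_right:
  "bracket n v (\<lambda>k. \<Sum>i\<in>I. a i * f i k) k = (\<Sum>i\<in>I. a i * bracket n v (f i) k :: 'k::field)"
  by (simp add: bracket_antisym[of n v] bracket_sum_left sum_negf)

lemma sum_unit: "finite S \<Longrightarrow> a \<in> S \<Longrightarrow> (\<Sum>x\<in>S. (if x = a then 1 else 0) * f x) = (f a :: 'k::field)"
proof -
  assume "finite S" "a \<in> S"
  have "(\<Sum>x\<in>S. (if x = a then 1 else 0) * f x) = (\<Sum>x\<in>S. if x = a then f x else 0)"
    by (rule sum.cong) auto
  thus ?thesis using \<open>finite S\<close> \<open>a \<in> S\<close> by simp
qed

lemma bracket_unitv: "p \<in> valid n \<Longrightarrow> q \<in> valid n \<Longrightarrow> bracket n (unitv p) (unitv q) = (brb p q :: idx \<Rightarrow> 'k::field)"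
proof (rule ext)
  fix k assume p: "p \<in> valid n" and q: "q \<in> valid n"
  have "bracket n (unitv p) (unitv q) k = (\<Sum>p'\<in>valid n. (if p' = p then 1 else 0) * (\<Sum>q'\<in>valid n. (if q' = q then 1 else 0) * (brb p' q' k :: 'k)))"
    unfolding bracket_def unitv_def by (simp add: sum_distrib_left mult.assoc mult.left_commute)
  also have "\<dots> = brb p q k" using p q by (simp add: sum_unit)
  finally show "bracket n (unitv p) (unitv q) k = (brb p q k :: 'k)" .
qed

lemma Ebasis_zero: assumes "is_Ebasis n ep" "i \<in> {1..n}" "\<not> is_E k" shows "ep i k = 0"
  using assms unfolding is_Ebasis_def Espace_def by auto

lemma Ebasis_zero2: assumes "is_Ebasis n ep" "i \<in> {1..n}" "k \<notin> valid n" shows "ep i k = 0"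
  using assms unfolding is_Ebasis_def Espace_def vec_def by auto

lemma ep_z: assumes "is_Ebasis n ep" "i \<in> {1..n}"
  shows "ep i A = 0" "ep i B = 0" "ep i X = 0" "ep i U = 0" "ep i Y = 0" "ep i C = 0" "ep i F = 0" "ep i H = 0"
   "ep i (W p q) = 0" "ep i (XI p) = 0" "ep i (UI p) = 0" "ep i (YI p) = 0"
  using Ebasis_zero[OF assms] by (auto simp: is_E_def)

lemma indepE: assumes Eb: "is_Ebasis n ep" and h: "\<forall>p\<in>{1..n}. (\<Sum>i=1..n. c i * ep i (E p)) = 0"
  shows "\<forall>i\<in>{1..n}. c i = 0"
proof -
  have "\<forall>k. (\<Sum>i=1..n. c i * ep i k) = 0"
  proof
    fix k show "(\<Sum>i=1..n. c i * ep i k) = 0"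
    proof (cases "k \<in> valid n \<and> is_E k")
      case True
      then obtain p where "k = E p" "p \<in> {1..n}" by (auto simp: is_E_def)
      thus ?thesis using h by auto
    next
      case False
      hence "\<forall>i\<in>{1..n}. ep i k = 0" using Ebasis_zero[OF Eb] Ebasis_zero2[OF Eb] by auto
      thus ?thesis by simp
    qed
  qed
  thus ?thesis using Eb unfolding is_Ebasis_def by blast
qed




definition rep :: "nat \<Rightarrow> (nat \<Rightarrow> idx \<Rightarrow> 'k::field) \<Rightarrow> (idx \<Rightarrow> 'k) \<Rightarrow> (idx \<Rightarrow> 'k) \<Rightarrow> bool" where
  "rep n ep w c \<longleftrightarrow> (\<forall>k. k \<notin> valid n \<longrightarrow> c k = 0) \<and> w = (\<lambda>k. \<Sum>j\<in>valid n. c j * newbasis n ep j k)"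

definition inspan :: "nat \<Rightarrow> (nat \<Rightarrow> idx \<Rightarrow> 'k::field) \<Rightarrow> (idx \<Rightarrow> 'k) \<Rightarrow> bool" where
  "inspan n ep w \<longleftrightarrow> (\<exists>c. rep n ep w c)"

lemma inspan_nb: "j \<in> valid n \<Longrightarrow> inspan n ep (newbasis n ep j)"
  unfolding inspan_def rep_def
  apply (rule exI[of _ "\<lambda>k. if k = j then 1 else 0"])
  apply (auto intro!: ext)
  apply (subst sum_unit[symmetric, where S="valid n" and a=j], auto)
  done

lemma inspan_lin: assumes "inspan n ep u" "inspan n ep v"
  shows "inspan n ep (\<lambda>k. a * u k + b * v k)"
proof -
  obtain cu cv where cu: "rep n ep u cu" and cv: "rep n ep v cv" using assms unfolding inspan_def by blast
  show ?thesis unfolding inspan_def rep_def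
    apply (rule exI[of _ "\<lambda>k. a * cu k + b * cv k"])
    using cu cv unfolding rep_def
    by (auto simp: algebra_simps sum.distrib sum_distrib_left)
qed

lemma inspan_zero: "inspan n ep (\<lambda>k. 0)"
  unfolding inspan_def rep_def by (rule exI[of _ "\<lambda>k. 0"]) simp

lemma inspan_sum: assumes "finite I" "\<forall>i\<in>I. inspan n ep (f i)"
  shows "inspan n ep (\<lambda>k. \<Sum>i\<in>I. a i * f i k)"
  using assms
proof (induction I rule: finite_induct)
  case empty thus ?case by (simp add: inspan_zero)
next
  case (insert x I)
  hence "inspan n ep (\<lambda>k. 1 * (\<Sum>i\<in>I. a i * f i k) + a x * f x k)"
    by (intro inspan_lin) auto
  thus ?case using insert by (simp add: add.commute)
qed

lemma inspan_neg: "inspan n ep u \<Longrightarrow> inspan n ep (\<lambda>k. - u k)"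
  using inspan_lin[of n ep u u "-1" 0] by simp

lemma unitv_vec: "j \<in> valid n \<Longrightarrow> unitv j \<in> vec n"
  unfolding vec_def unitv_def by auto

lemma spanning:
  fixes ep :: "nat \<Rightarrow> idx \<Rightarrow> 'k::field_char_0"
  assumes Eb: "is_Ebasis n ep" and w: "w \<in> vec n"
  shows "inspan n ep w"
proof -
  have "\<forall>p\<in>{1..n}. \<exists>c. unitv (E p) = (\<lambda>k. \<Sum>i=1..n. c i * ep i k)"
  proof
    fix p assume p: "p \<in> {1..n}"
    have "unitv (E p) \<in> vec n" by (rule unitv_vec) (use p in simp)
    hence "unitv (E p) \<in> Espace n" unfolding Espace_def is_E_def
      by (auto simp: unitv_def)
    thus "\<exists>c. unitv (E p) = (\<lambda>k. \<Sum>i=1..n. c i * ep i k)" using Eb unfolding is_Ebasis_def by blast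
  qed
  then obtain Q where Q: "\<forall>p\<in>{1..n}. unitv (E p) = (\<lambda>k. \<Sum>i=1..n. Q p i * ep i k)"
    by metis
  have nbE: "\<forall>i\<in>{1..n}. inspan n ep (ep i)" using inspan_nb[of "E i" n ep for i] by auto
  have sE: "inspan n ep (unitv (E p))" if p: "p \<in> {1..n}" for p
    using Q p inspan_sum[of "{1..n}" n ep ep "Q p"] nbE by simp
  have sB: "inspan n ep (unitv (T p))" if p: "p \<in> {1..n}" and T: "T = XI \<or> T = UI \<or> T = YI" for p T
  proof -
    define Z where "Z = (if T = XI then X else if T = UI then U else Y)"
    have Zv: "Z \<in> valid n" unfolding Z_def by auto
    have bT: "brb (E p) Z = (unitv (T p) :: idx \<Rightarrow> 'k)" using T unfolding Z_def by (auto simp: brb_vals)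
    have "(unitv (T p) :: idx \<Rightarrow> 'k) = bracket n (unitv (E p)) (unitv Z)"
      using p Zv bT by (simp add: bracket_unitv)
    also have "\<dots> = (\<lambda>k. \<Sum>i=1..n. Q p i * bracket n (ep i) (unitv Z) k)"
      using Q p by (intro ext) (simp add: bracket_sum_left)
    finally have eq: "unitv (T p) = (\<lambda>k. \<Sum>i=1..n. Q p i * bracket n (ep i) (unitv Z) k)" .
    have "\<forall>i\<in>{1..n}. inspan n ep (bracket n (ep i) (unitv Z))"
    proof
      fix i assume i: "i \<in> {1..n}"
      have "bracket n (ep i) (unitv Z) = newbasis n ep (T i)" using T unfolding Z_def by auto
      thus "inspan n ep (bracket n (ep i) (unitv Z))" using i inspan_nb[of "T i" n ep] T by auto
    qed
    thus ?thesis unfolding eq by (intro inspan_sum) auto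
  qed
  have bb: "inspan n ep (bracket n (ep i) (ep j))" if i: "i \<in> {1..n}" and j: "j \<in> {1..n}" for i j
  proof -
    consider "i < j" | "i = j" | "j < i" by arith
    thus ?thesis
    proof cases
      case 1 thus ?thesis using inspan_nb[of "W i j" n ep] i j by auto
    next
      case 2
      have "bracket n (ep i) (ep i) = (\<lambda>k. 0)" by (rule ext, rule bracket_self)
      thus ?thesis using 2 inspan_zero by simp
    next
      case 3
      hence "inspan n ep (\<lambda>k. - bracket n (ep j) (ep i) k)" using inspan_nb[of "W j i" n ep] i j
        by (intro inspan_neg) auto
      thus ?thesis by (simp add: bracket_antisym[of n "ep j"])
    qed
  qed
  have sW: "inspan n ep (unitv (W p q))" if "p \<in> {1..n}" "q \<in> {1..n}" "p < q" for p q
  proof -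
    have "(unitv (W p q) :: idx \<Rightarrow> 'k) = bracket n (unitv (E p)) (unitv (E q))"
      using that by (auto simp: bracket_unitv brb_def)
    also have "\<dots> = (\<lambda>k. \<Sum>i=1..n. Q p i * (\<Sum>j=1..n. Q q j * bracket n (ep i) (ep j) k))"
      using Q that by (intro ext) (simp add: bracket_sum_left bracket_sum_right)
    finally have eq: "unitv (W p q) = \<dots>" .
    have "\<forall>i\<in>{1..n}. inspan n ep (\<lambda>k. \<Sum>j=1..n. Q q j * bracket n (ep i) (ep j) k)"
      using bb by (auto intro!: inspan_sum)
    thus ?thesis unfolding eq by (intro inspan_sum) auto
  qed
  have sall: "\<forall>r\<in>valid n. inspan n ep (unitv r)"
  proof
    fix r assume r: "r \<in> valid n"
    show "inspan n ep (unitv r)"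
      using r unfolding valid_eq
      apply (elim UnE imageE; clarsimp)
      using sE sW sB inspan_nb[of A n ep] inspan_nb[of B n ep] inspan_nb[of X n ep]
        inspan_nb[of U n ep] inspan_nb[of Y n ep] inspan_nb[of C n ep] inspan_nb[of F n ep]
        inspan_nb[of H n ep]
      by auto
  qed
  have "w = (\<lambda>k. \<Sum>r\<in>valid n. w r * unitv r k)"
  proof
    fix k show "w k = (\<Sum>r\<in>valid n. w r * unitv r k)"
    proof (cases "k \<in> valid n")
      case True
      have "(\<Sum>r\<in>valid n. w r * unitv r k) = (\<Sum>r\<in>valid n. if r = k then w r else 0)"
        by (rule sum.cong) (auto simp: unitv_def)
      thus ?thesis using True by simp
    next
      case False
      thus ?thesis using w unfolding vec_def unitv_def by (auto intro!: sum.neutral)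
    qed
  qed
  thus ?thesis using sall by (metis finite_valid inspan_sum)
qed




lemmas bsimps = bracket_C bracket_F bracket_H bracket_XI bracket_UI bracket_YI bracket_W bracket_other

lemma expS: assumes Eb: "is_Ebasis n ep"
  shows "(\<Sum>j\<in>valid n. c j * newbasis n ep j A) = c A"
   "(\<Sum>j\<in>valid n. c j * newbasis n ep j B) = c B"
   "(\<Sum>j\<in>valid n. c j * newbasis n ep j X) = c X"
   "(\<Sum>j\<in>valid n. c j * newbasis n ep j U) = c U"
   "(\<Sum>j\<in>valid n. c j * newbasis n ep j Y) = c Y"
   "(\<Sum>j\<in>valid n. c j * newbasis n ep j C) = c C"
   "(\<Sum>j\<in>valid n. c j * newbasis n ep j F) = c F"
   "(\<Sum>j\<in>valid n. c j * newbasis n ep j H) = c H"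
  by (simp_all add: sum_valid bsimps ep_z[OF Eb] unitv_def cong: if_cong)

lemma expE: assumes Eb: "is_Ebasis n ep"
  shows "(\<Sum>j\<in>valid n. c j * newbasis n ep j (E p)) = (\<Sum>i=1..n. c (E i) * ep i (E p))"
  by (simp add: sum_valid bsimps ep_z[OF Eb] unitv_def cong: if_cong)

lemma expXI: assumes Eb: "is_Ebasis n ep" and p: "p \<in> {1..n}"
  shows "(\<Sum>j\<in>valid n. c j * newbasis n ep j (XI p)) = (\<Sum>i=1..n. c (XI i) * ep i (E p))"
   "(\<Sum>j\<in>valid n. c j * newbasis n ep j (UI p)) = (\<Sum>i=1..n. c (UI i) * ep i (E p))"
   "(\<Sum>j\<in>valid n. c j * newbasis n ep j (YI p)) = (\<Sum>i=1..n. c (YI i) * ep i (E p))"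
  using p by (simp_all add: sum_valid bsimps ep_z[OF Eb] unitv_def cong: if_cong)

lemma expW: assumes Eb: "is_Ebasis n ep" and pq: "1 \<le> p" "p < q" "q \<le> n"
  shows "(\<Sum>j\<in>valid n. c j * newbasis n ep j (W p q)) =
    (\<Sum>i=1..n. \<Sum>l=1..n. if i<l then c (W i l) * (ep i (E p) * ep l (E q) - ep i (E q) * ep l (E p)) else 0)"
  using pq by (simp add: sum_valid bsimps ep_z[OF Eb] unitv_def cong: if_cong)




lemma Wblock:
  fixes ep :: "nat \<Rightarrow> idx \<Rightarrow> 'k::field_char_0"
  assumes Eb: "is_Ebasis n ep"
    and h: "\<forall>p q. 1\<le>p \<longrightarrow> p<q \<longrightarrow> q\<le>n \<longrightarrow>
      (\<Sum>i=1..n. \<Sum>l=1..n. if i<l then dd i l * (ep i (E p) * ep l (E q) - ep i (E q) * ep l (E p)) else 0) = 0"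
  shows "\<forall>i l. 1\<le>i \<longrightarrow> i<l \<longrightarrow> l\<le>n \<longrightarrow> dd i l = 0"
proof -
  define P where "P i p = ep i (E p)" for i p
  define M where "M i l = (if i<l then dd i l else if l<i then - dd l i else 0)" for i l
  define R where "R p q = (\<Sum>i=1..n. \<Sum>l=1..n. if i<l then dd i l * (P i p * P l q - P i q * P l p) else 0)" for p q
  have G: "R p q = (\<Sum>i=1..n. \<Sum>l=1..n. M i l * P i p * P l q)" for p q
  proof -
    have pt: "(if i<l then dd i l * (P i p * P l q - P i q * P l p) else 0)
       = (if i<l then dd i l * P i p * P l q else 0) + (if i<l then - dd i l * P i q * P l p else 0)" for i l
      by (simp add: algebra_simps)
    have "R p q = (\<Sum>i=1..n. \<Sum>l=1..n. if i<l then dd i l * P i p * P l q else 0)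
        + (\<Sum>i=1..n. \<Sum>l=1..n. if i<l then - dd i l * P i q * P l p else 0)"
      unfolding R_def pt by (simp add: sum.distrib)
    also have "(\<Sum>i=1..n. \<Sum>l=1..n. if i<l then - dd i l * P i q * P l p else 0)
       = (\<Sum>l=1..n. \<Sum>i=1..n. if i<l then - dd i l * P i q * P l p else 0)"
      by (rule sum.swap)
    also have "(\<Sum>i=1..n. \<Sum>l=1..n. if i<l then dd i l * P i p * P l q else 0)
       + (\<Sum>l=1..n. \<Sum>i=1..n. if i<l then - dd i l * P i q * P l p else 0)
       = (\<Sum>i=1..n. \<Sum>l=1..n. M i l * P i p * P l q)"
      unfolding sum.distrib[symmetric] M_def
      by (intro sum.cong refl) auto
    finally show ?thesis .
  qed
  have anti: "R q p = - R p q" for p q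
  proof -
    have "R q p = (\<Sum>i=1..n. \<Sum>l=1..n. - (if i<l then dd i l * (P i p * P l q - P i q * P l p) else 0))"
      unfolding R_def by (intro sum.cong refl) (simp add: algebra_simps)
    thus ?thesis unfolding R_def by (simp add: sum_negf)
  qed
  have R0: "R p q = 0" if "p \<in> {1..n}" "q \<in> {1..n}" for p q
  proof -
    consider "p < q" | "p = q" | "q < p" by arith
    thus ?thesis
    proof cases
      case 1 thus ?thesis using h that unfolding R_def P_def by auto
    next
      case 2 thus ?thesis using anti[of p p] by simp
    next
      case 3 hence "R q p = 0" using h that unfolding R_def P_def by auto
      thus ?thesis using anti[of p q] by simp
    qed
  qed
  have S1: "\<forall>i\<in>{1..n}. (\<Sum>l=1..n. M i l * P l q) = 0" if q: "q \<in> {1..n}" for q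
  proof (rule indepE[OF Eb], rule ballI)
    fix p assume p: "p \<in> {1..n}"
    have "(\<Sum>i=1..n. (\<Sum>l=1..n. M i l * P l q) * ep i (E p)) = R p q"
      unfolding G P_def sum_distrib_right by (intro sum.cong refl) (simp add: mult_ac)
    thus "(\<Sum>i=1..n. (\<Sum>l=1..n. M i l * P l q) * ep i (E p)) = 0" using R0 p q by simp
  qed
  have S2: "\<forall>l\<in>{1..n}. M i l = 0" if i: "i \<in> {1..n}" for i
    by (rule indepE[OF Eb]) (use S1 i in \<open>auto simp: P_def\<close>)
  show ?thesis
  proof (intro allI impI)
    fix i l assume "1 \<le> i" "i < l" "l \<le> n"
    hence "M i l = 0" using S2 by auto
    thus "dd i l = 0" using \<open>i < l\<close> unfolding M_def by simp
  qed
qed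

lemma uniq0:
  fixes ep :: "nat \<Rightarrow> idx \<Rightarrow> 'k::field_char_0"
  assumes Eb: "is_Ebasis n ep" and sup: "\<forall>k. k \<notin> valid n \<longrightarrow> d k = 0"
    and Z: "\<forall>k. (\<Sum>j\<in>valid n. d j * newbasis n ep j k) = 0"
  shows "d = (\<lambda>k. 0)"
proof (rule ext)
  fix j show "d j = 0"
  proof (cases "j \<in> valid n")
    case False thus ?thesis using sup by auto
  next
    case True
    have dE: "\<forall>i\<in>{1..n}. d (E i) = 0"
      by (rule indepE[OF Eb]) (use Z expE[OF Eb, of d] in auto)
    have dXI: "\<forall>i\<in>{1..n}. d (XI i) = 0"
      by (rule indepE[OF Eb]) (use Z expXI[OF Eb, of _ d] in auto)
    have dUI: "\<forall>i\<in>{1..n}. d (UI i) = 0"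
      by (rule indepE[OF Eb]) (use Z expXI[OF Eb, of _ d] in auto)
    have dYI: "\<forall>i\<in>{1..n}. d (YI i) = 0"
      by (rule indepE[OF Eb]) (use Z expXI[OF Eb, of _ d] in auto)
    have dW: "\<forall>i l. 1\<le>i \<longrightarrow> i<l \<longrightarrow> l\<le>n \<longrightarrow> d (W i l) = 0"
      by (rule Wblock[OF Eb, of "\<lambda>i l. d (W i l)"]) (use Z expW[OF Eb, of _ _ d] in auto)
    show ?thesis using True dE dXI dUI dYI dW Z expS[OF Eb, of d] unfolding valid_def by auto
  qed
qed

lemma ex1_rep:
  fixes ep :: "nat \<Rightarrow> idx \<Rightarrow> 'k::field_char_0"
  assumes Eb: "is_Ebasis n ep" and w: "w \<in> vec n"
  shows "\<exists>!c. rep n ep w c"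
proof -
  obtain c where c: "rep n ep w c" using spanning[OF Eb w] unfolding inspan_def by blast
  moreover have "c' = c" if c': "rep n ep w c'" for c'
  proof -
    have "(\<lambda>k. c' k - c k) = (\<lambda>k. 0)"
    proof (rule uniq0[OF Eb])
      show "\<forall>k. k \<notin> valid n \<longrightarrow> c' k - c k = 0" using c c' unfolding rep_def by auto
      show "\<forall>k. (\<Sum>j\<in>valid n. (c' j - c j) * newbasis n ep j k) = 0"
      proof
        fix k
        have e1: "w = (\<lambda>k. \<Sum>j\<in>valid n. c' j * newbasis n ep j k)" using c' unfolding rep_def by blast
        have e2: "w = (\<lambda>k. \<Sum>j\<in>valid n. c j * newbasis n ep j k)" using c unfolding rep_def by blast
        have "w k = (\<Sum>j\<in>valid n. c' j * newbasis n ep j k)" "w k = (\<Sum>j\<in>valid n. c j * newbasis n ep j k)"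
          by (rule fun_cong[OF e1], rule fun_cong[OF e2])
        thus "(\<Sum>j\<in>valid n. (c' j - c j) * newbasis n ep j k) = 0"
          by (simp add: left_diff_distrib sum_subtractf)
      qed
    qed
    thus ?thesis by (auto simp: fun_eq_iff)
  qed
  ultimately show ?thesis by blast
qed

lemma coord_rep: "coord n ep w r = (THE c. rep n ep w c) r"
  unfolding coord_def rep_def ..

lemma coord_S:
  fixes ep :: "nat \<Rightarrow> idx \<Rightarrow> 'k::field_char_0"
  assumes Eb: "is_Ebasis n ep" and w: "w \<in> vec n" and r: "r \<in> {A,B,X,U,Y,C,F,H}"
  shows "coord n ep w r = w r"
proof -
  have c: "rep n ep w (THE c. rep n ep w c)" by (rule theI'[OF ex1_rep[OF Eb w]])
  let ?c = "THE c. rep n ep w c"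
  have eqw: "w = (\<lambda>k. \<Sum>j\<in>valid n. ?c j * newbasis n ep j k)" using c unfolding rep_def by blast
  have "w r = (\<Sum>j\<in>valid n. ?c j * newbasis n ep j r)" by (rule fun_cong[OF eqw])
  also have "\<dots> = ?c r" using r expS[OF Eb, of ?c] by auto
  finally show ?thesis unfolding coord_rep by simp
qed

lemma coord_E:
  fixes ep :: "nat \<Rightarrow> idx \<Rightarrow> 'k::field_char_0"
  assumes Eb: "is_Ebasis n ep" and w: "w \<in> vec n" and wE: "\<forall>p. w (E p) = 0" and i: "i \<in> {1..n}"
  shows "coord n ep w (E i) = 0"
proof -
  have c: "rep n ep w (THE c. rep n ep w c)" by (rule theI'[OF ex1_rep[OF Eb w]])
  let ?c = "THE c. rep n ep w c"
  have "\<forall>p\<in>{1..n}. (\<Sum>i=1..n. ?c (E i) * ep i (E p)) = 0"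
  proof
    fix p
    have eqw: "w = (\<lambda>k. \<Sum>j\<in>valid n. ?c j * newbasis n ep j k)" using c unfolding rep_def by blast
    have "w (E p) = (\<Sum>j\<in>valid n. ?c j * newbasis n ep j (E p))" by (rule fun_cong[OF eqw])
    thus "(\<Sum>i=1..n. ?c (E i) * ep i (E p)) = 0" using wE expE[OF Eb, of ?c p] by simp
  qed
  from indepE[OF Eb this] i show ?thesis unfolding coord_rep by simp
qed




lemma unitv_same[simp]: "unitv r r = 1" by (simp add: unitv_def)
lemma unitv_diff[simp]: "r \<noteq> s \<Longrightarrow> unitv r s = 0" by (simp add: unitv_def)

lemma brb_zero: "brb B X = (\<lambda>k. 0)" "brb X C = (\<lambda>k. 0)" "brb A X = (\<lambda>k. 0)" "brb A U = (\<lambda>k. 0)"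
  "brb (E i) A = (\<lambda>k. 0)" "brb (E i) B = (\<lambda>k. 0)"
  by (simp_all add: brb_def)

theorem mainTheorem3:
  fixes n :: nat and ep :: "nat \<Rightarrow> idx \<Rightarrow> 'k::field_char_0"
    and D :: "(idx \<Rightarrow> 'k) \<Rightarrow> (idx \<Rightarrow> 'k)"
  assumes "n \<ge> 1" and "is_Ebasis n ep" and "Der1 n D"
  shows "(\<forall>i\<in>{1..n}. diagc n ep D (E i) = 0)
       \<and> (diagc n ep D A = diagc n ep D B \<and> diagc n ep D B = diagc n ep D X)
       \<and> (diagc n ep D H = diagc n ep D F \<and> diagc n ep D F = 3 * diagc n ep D A)
       \<and> (diagc n ep D Y = diagc n ep D U \<and> diagc n ep D U = diagc n ep D C
          \<and> diagc n ep D C = 2 * diagc n ep D A)"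
proof -
  note n1 = assms(1) and Eb = assms(2)
  have der: "is_derivation n D" and DE: "\<forall>v\<in>Espace n. \<forall>k. is_E k \<longrightarrow> D v k = 0"
    using assms(3) unfolding Der1_def by auto
  have Dvec: "\<And>v. v \<in> vec n \<Longrightarrow> D v \<in> vec n" using der unfolding is_derivation_def by auto
  have Dlin: "\<And>v w c. v \<in> vec n \<Longrightarrow> w \<in> vec n \<Longrightarrow> D (\<lambda>k. v k + c * w k) = (\<lambda>k. D v k + c * D w k)"
    using der unfolding is_derivation_def by auto
  have Dbr: "\<And>v w. v \<in> vec n \<Longrightarrow> w \<in> vec n \<Longrightarrow> D (bracket n v w) = (\<lambda>k. bracket n (D v) w k + bracket n v (D w) k)"
    using der unfolding is_derivation_def by auto
  have z: "(\<lambda>k. 0) \<in> vec n" unfolding vec_def by simp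
  have D0: "D (\<lambda>k. 0) k = 0" for k
  proof -
    have "D (\<lambda>k. 0 + 1 * 0) = (\<lambda>k. D (\<lambda>k. 0) k + 1 * D (\<lambda>k. 0) k)" using Dlin[OF z z] .
    hence "D (\<lambda>k. 0) k = D (\<lambda>k. 0) k + D (\<lambda>k. 0) k" by (simp add: fun_eq_iff)
    thus ?thesis by simp
  qed
  have Dd: "D (brb p q) k = bracket n (D (unitv p)) (unitv q) k + bracket n (unitv p) (D (unitv q)) k"
    if "p \<in> valid n" "q \<in> valid n" for p q k
  proof -
    have bu: "bracket n (unitv p) (unitv q) = (brb p q :: idx \<Rightarrow> 'k)" by (rule bracket_unitv[OF that])
    show ?thesis using Dbr[OF unitv_vec[OF that(1)] unitv_vec[OF that(2)]] unfolding bu by simp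
  qed
  have E1: "E 1 \<in> valid n" using n1 by simp
  have Z1: "D (unitv A) X = 0" using Dd[OF E1, of A "XI 1"] D0 n1 by (simp add: brb_zero bracket_XI)
  have Z2: "D (unitv B) X = 0" using Dd[OF E1, of B "XI 1"] D0 n1 by (simp add: brb_zero bracket_XI)
  have Z3: "D (unitv U) Y = 0" using Dd[of A U F] D0 Z1 by (simp add: brb_zero bracket_F algebra_simps)
  have Z4: "D (unitv X) A = 0" using Dd[of B X C] D0 by (simp add: brb_zero bracket_C)
  have Z5: "D (unitv C) Y = 0" using Dd[of X C H] D0 Z4 by (simp add: brb_zero bracket_H algebra_simps)
  have Z6a: "D (unitv H) F = D (unitv X) A + D (unitv Y) U" using Dd[of X Y F] by (simp add: brb_vals bracket_F)
  have Z6b: "D (unitv H) F = D (unitv C) Y" using Dd[of A C F] by (simp add: brb_vals bracket_F)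
  have Z7: "D (unitv X) B = 0" using Dd[of A X C] D0 by (simp add: brb_zero bracket_C)
  have e1: "D (unitv C) C = D (unitv A) A + D (unitv B) B" using Dd[of A B C] by (simp add: brb_vals bracket_C)
  have e2: "D (unitv H) H = D (unitv A) A + D (unitv C) C" using Dd[of A C H] by (simp add: brb_vals bracket_H)
  have e3: "D (unitv H) H = D (unitv B) B + D (unitv U) U + D (unitv U) Y" using Dd[of B U H] by (simp add: brb_vals bracket_H)
  have e4: "D (unitv H) H = D (unitv B) B + D (unitv B) X + D (unitv Y) U + D (unitv Y) Y" using Dd[of B Y H] by (simp add: brb_vals bracket_H)
  have e5: "D (unitv H) H = D (unitv X) B + D (unitv X) X + D (unitv Y) Y" using Dd[of X Y H] by (simp add: brb_vals bracket_H)
  have e6: "D (unitv F) F = D (unitv A) A + D (unitv Y) Y" using Dd[of A Y F] by (simp add: brb_vals bracket_F)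
  have e7: "D (unitv F) F = D (unitv X) X + D (unitv U) U" using Dd[of X U F] by (simp add: brb_vals bracket_F)
  have dS: "diagc n ep D r = D (unitv r) r" if "r \<in> {A,B,X,U,Y,C,F,H}" for r
  proof -
    have "newbasis n ep r = unitv r" using that by auto
    moreover have "r \<in> valid n" using that by auto
    ultimately show ?thesis unfolding diagc_def using coord_S[OF Eb Dvec[OF unitv_vec] that] by simp
  qed
  have dE: "diagc n ep D (E i) = 0" if i: "i \<in> {1..n}" for i
  proof -
    have epE: "ep i \<in> Espace n" using Eb i unfolding is_Ebasis_def by auto
    hence ev: "ep i \<in> vec n" unfolding Espace_def by auto
    have ez: "\<forall>p. D (ep i) (E p) = 0" using DE epE by (auto simp: is_E_def)
    show ?thesis unfolding diagc_def using coord_E[OF Eb Dvec[OF ev] ez i] by simp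
  qed
  define a where "a = D (unitv A) A"
  define b where "b = D (unitv B) B"
  define x where "x = D (unitv X) X"
  define u where "u = D (unitv U) U"
  define y where "y = D (unitv Y) Y"
  define c where "c = D (unitv C) C"
  define f where "f = D (unitv F) F"
  define h where "h = D (unitv H) H"
  have Y0: "D (unitv Y) U = 0" using Z6a Z6b Z5 Z4 by simp
  have q1: "c = a + b" "h = a + c" "h = b + u" "h = b + y" "h = x + y" "f = a + y" "f = x + u"
    using e1 e2 e3 e4 e5 e6 e7 Z1 Z2 Z3 Z7 Y0 unfolding a_def b_def x_def u_def y_def c_def f_def h_def
    by simp_all
  have bx: "b = x" using q1 by (metis add_right_cancel)
  have uy: "u = y" using q1 by (metis add_left_cancel)
  have ax: "a = x" using q1 uy by (metis add_right_cancel)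
  have res: "a = b \<and> b = x \<and> h = f \<and> f = 3 * a \<and> y = u \<and> u = c \<and> c = 2 * a"
    using q1 bx uy ax by (simp add: algebra_simps)
  show ?thesis using res dE
    by (simp add: dS a_def b_def x_def u_def y_def c_def f_def h_def)
qed


end
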